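(* Let $r\geq 2$, $l\in\{0,1,\ldots,r-1\}$ and $n\geq 1$ be integers, and define the polynomial $$h(s)=\sum_{k=0}^{n}(-1)^k\binom{r(n-k)+k+l}{k}s^{n-k}.$$ Then all roots of $h$ are real and lie in the open interval $\left(0,\ r^r/(r-1)^{r-1}\right)$. Moreover $r^r/(r-1)^{r-1}<er$, where $e$ is Euler's number, so all roots lie in $(0,er)$. *)

theory Defs
  imports "HOL-Analysis.Analysis" "HOL-Computational_Algebra.Polynomial"
begin

definition hpoly :: "nat \<Rightarrow> nat \<Rightarrow> nat \<Rightarrow> real poly" where
  "hpoly r l n = (\<Sum>k=0..n. monom ((-1) ^ k * real ((r * (n - k) + k + l) choose k)) (n - k))"

end

theory Submission
  imports Defs
begin
lemma coeff_hpoly: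
  "coeff (hpoly r l n) i = (if i \<le> n then (-1)^(n-i) * real ((r*i + (n-i) + l) choose (n-i)) else 0)"
proof (cases "i \<le> n")
  case True
  have "coeff (hpoly r l n) i = (\<Sum>k\<in>{0..n}. if k = n - i then (-1) ^ k * real ((r * (n - k) + k + l) choose k) else 0)"
    unfolding hpoly_def coeff_sum coeff_monom
    by (rule sum.cong) (use True in auto)
  also have "\<dots> = (-1)^(n-i) * real ((r*i + (n-i) + l) choose (n-i))"
    using True by (simp add: sum.delta)
  finally show ?thesis using True by simp
next
  case False
  have "coeff (hpoly r l n) i = (\<Sum>k\<in>{0..n}. 0)"
    unfolding hpoly_def coeff_sum coeff_monom
    by (rule sum.cong) (use False in auto)
  then show ?thesis using False by simp
qed

lemma hpoly_rec1:
  assumes "n \<ge> 1"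
  shows "hpoly r (Suc l) n = hpoly r l n - hpoly r (Suc l) (n-1)"
proof (rule poly_eqI)
  fix i
  show "coeff (hpoly r (Suc l) n) i = coeff (hpoly r l n - hpoly r (Suc l) (n - 1)) i"
  proof (cases "i < n")
    case True
    then obtain t where t: "n - i = Suc t" "n - 1 - i = t" 
      by (metis Suc_diff_Suc diff_Suc_1 diff_commute)
    have e: "r*i + Suc t + Suc l = Suc (r*i + Suc t + l)" "r*i + t + Suc l = r*i + Suc t + l" by simp_all
    show ?thesis using True t
      by (simp add: coeff_hpoly e del: binomial_Suc_Suc) (simp add: algebra_simps)
  next
    case False
    then show ?thesis using assms by (cases "i = n") (auto simp: coeff_hpoly)
  qed
qed

lemma hpoly_rec2:
  assumes "n \<ge> 1" "r \<ge> 1"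
  shows "hpoly r 0 n = pCons 0 (hpoly r (r-1) (n-1)) - hpoly r 0 (n-1)"
proof (rule poly_eqI)
  fix i
  show "coeff (hpoly r 0 n) i = coeff (pCons 0 (hpoly r (r-1) (n-1)) - hpoly r 0 (n-1)) i"
  proof (cases i)
    case 0
    then show ?thesis using assms by (cases n) (auto simp: coeff_hpoly)
  next
    case (Suc i')
    have cp: "coeff (pCons 0 (hpoly r (r-1) (n-1))) i = coeff (hpoly r (r-1) (n-1)) i'"
      using Suc by simp
    show ?thesis
    proof (cases "i < n")
      case True
      then obtain t where nt: "n = Suc (i + t)" by (auto simp: less_iff_Suc_add)
      then have t: "n - i = Suc t" "n - 1 - i = t" "n - 1 - i' = Suc t"
        using Suc by simp_all
      define a where "a = r*i + t"
      have e: "r*i' + Suc t + (r - 1) = a" using Suc assms unfolding a_def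
        by (simp add: algebra_simps)
      have e2: "r*i + Suc t = Suc a" "r*i + t + 0 = a" unfolding a_def by simp_all
      have L: "coeff (hpoly r 0 n) i = (-1)^(Suc t) * real (Suc a choose Suc t)"
        using True t by (simp only: coeff_hpoly e2 if_True less_imp_le) simp
      have R1: "coeff (hpoly r (r-1) (n-1)) i' = (-1)^(Suc t) * real (a choose Suc t)"
        using True t Suc nt by (simp only: coeff_hpoly e) simp
      have R2: "coeff (hpoly r 0 (n-1)) i = (-1)^t * real (a choose t)"
        using True t nt by (simp only: coeff_hpoly e2) simp
      show ?thesis unfolding coeff_diff cp L R1 R2 by (simp add: algebra_simps)
    next
      case False
      show ?thesis
      proof (cases "i = n")
        case True
        have e: "r*i' + (r - 1) = r * i - 1" using Suc assms
          by (simp add: algebra_simps)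
        have L: "coeff (hpoly r 0 n) i = 1" using True by (simp add: coeff_hpoly)
        have R1: "coeff (hpoly r (r-1) (n-1)) i' = 1" using True Suc by (simp add: coeff_hpoly)
        have R2: "coeff (hpoly r 0 (n-1)) i = 0" using True assms by (simp add: coeff_hpoly)
        show ?thesis unfolding coeff_diff cp L R1 R2 by simp
      next
        case False
        then show ?thesis using \<open>\<not> i < n\<close> Suc assms by (auto simp: coeff_hpoly)
      qed
    qed
  qed
qed

definition Pn :: "nat \<Rightarrow> nat \<Rightarrow> real poly" where
  "Pn r N = hpoly r (N mod r) (N div r)"

lemma dm: "l < (r::nat) \<Longrightarrow> (r*n+l) div r = n \<and> (r*n+l) mod r = l"
  by auto

lemma Pn_small: "N < r \<Longrightarrow> Pn r N = 1"
  by (simp add: Pn_def hpoly_def)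

lemma Pn_rec:
  assumes "2 \<le> r" "r \<le> N"
  shows "Pn r N = (if N mod r = 0 then pCons 0 (Pn r (N-1)) else Pn r (N-1)) - Pn r (N-r)"
proof -
  define n where "n = N div r"
  define l where "l = N mod r"
  have N: "N = r*n + l" unfolding n_def l_def by simp
  have lr: "l < r" unfolding l_def using assms by simp
  have n1: "n \<ge> 1" unfolding n_def using div_le_mono[OF assms(2), of r] assms by simp
  show ?thesis
  proof (cases l)
    case 0
    have a: "N - 1 = r*(n-1) + (r-1)" using N 0 n1 assms
      by (cases n) (auto simp: algebra_simps)
    have b: "N - r = r*(n-1) + 0" using N 0 n1 by (cases n) (auto simp: algebra_simps)
    have "Pn r N = hpoly r 0 n" unfolding Pn_def n_def using 0 l_def by simp
    also have "\<dots> = pCons 0 (hpoly r (r-1) (n-1)) - hpoly r 0 (n-1)"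
      using hpoly_rec2[OF n1] assms by simp
    also have "hpoly r (r-1) (n-1) = Pn r (N-1)" unfolding Pn_def a using dm[of "r-1" r "n-1"] assms by simp
    also have "hpoly r 0 (n-1) = Pn r (N-r)" unfolding Pn_def b using dm[of 0 r "n-1"] assms by simp
    finally show ?thesis using 0 l_def by simp
  next
    case (Suc l')
    have a: "N - 1 = r*n + l'" using N Suc by simp
    have b: "N - r = r*(n-1) + l" using N n1 by (cases n) (auto simp: algebra_simps)
    have "Pn r N = hpoly r (Suc l') n" unfolding Pn_def n_def using Suc l_def by simp
    also have "\<dots> = hpoly r l' n - hpoly r (Suc l') (n-1)"
      using hpoly_rec1[OF n1] by simp
    also have "hpoly r l' n = Pn r (N-1)" unfolding Pn_def a using dm[of l' r n] lr Suc by simp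
    also have "hpoly r (Suc l') (n-1) = Pn r (N-r)" unfolding Pn_def b using dm[of l r "n-1"] lr Suc by simp
    finally show ?thesis using Suc l_def by simp
  qed
qed

lemma Pn_coeff_top: "coeff (Pn r N) (N div r) = 1"
  by (simp add: Pn_def coeff_hpoly)

lemma Pn_degree: "degree (Pn r N) = N div r"
proof (rule antisym)
  show "degree (Pn r N) \<le> N div r"
    by (rule degree_le) (simp add: Pn_def coeff_hpoly)
  show "N div r \<le> degree (Pn r N)"
    by (rule le_degree) (simp add: Pn_coeff_top)
qed

lemma prod_roots:
  fixes p :: "real poly"
  assumes "degree p = d" "coeff p d = 1" "\<forall>j<d. poly p (\<rho> j) = 0" "inj_on \<rho> {..<d}"
  shows "p = (\<Prod>j<d. [:-\<rho> j, 1:])"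
  using assms
proof (induction d arbitrary: p)
  case 0
  then show ?case by (metis coeff_pCons_0 degree_0_id lessThan_0 prod.empty one_pCons)
next
  case (Suc d)
  have "poly p (\<rho> d) = 0" using Suc.prems by simp
  then obtain q where pq: "p = [:-\<rho> d, 1:] * q" by (meson dvdE poly_eq_0_iff_dvd)
  have q0: "q \<noteq> 0" using pq Suc.prems(2) by auto
  have "degree ([:-\<rho> d, 1:] * q) = degree [:-\<rho> d,1:] + degree q"
    by (rule degree_mult_eq) (use q0 in auto)
  then have dq: "degree q = d" using Suc.prems(1) pq by simp
  have "lead_coeff p = lead_coeff [:-\<rho> d, 1:] * lead_coeff q" unfolding pq by (rule lead_coeff_mult)
  then have cq: "coeff q d = 1" using Suc.prems(1,2) dq by simp
  have rq: "\<forall>j<d. poly q (\<rho> j) = 0"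
  proof (intro allI impI)
    fix j assume j: "j < d"
    have "\<rho> j \<noteq> \<rho> d" using Suc.prems(4) j by (auto dest: inj_onD)
    moreover have "poly p (\<rho> j) = 0" using Suc.prems(3) j by simp
    ultimately show "poly q (\<rho> j) = 0" using pq by simp
  qed
  have "inj_on \<rho> {..<d}" using Suc.prems(4) by (rule inj_on_subset) auto
  then have "q = (\<Prod>j<d. [:-\<rho> j, 1:])" using Suc.IH dq cq rq by blast
  then show ?case using pq by (simp add: mult.commute)
qed

lemma sign_prod:
  fixes \<rho> :: "nat \<Rightarrow> real"
  assumes "k \<le> d" "\<forall>i<k. x < \<rho> i" "\<forall>i. k \<le> i \<and> i < d \<longrightarrow> \<rho> i < x"
  shows "0 < (-1)^k * (\<Prod>j<d. (x - \<rho> j))"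
proof -
  have U: "{..<d} = {..<k} \<union> {k..<d}" using assms(1) by auto
  have "(\<Prod>j<d. (x - \<rho> j)) = (\<Prod>j<k. (x - \<rho> j)) * (\<Prod>j\<in>{k..<d}. (x - \<rho> j))"
    unfolding U by (rule prod.union_disjoint) auto
  moreover have "(-1)^k * (\<Prod>j<k. (x - \<rho> j)) = (\<Prod>j<k. (\<rho> j - x))"
  proof -
    have "(\<Prod>j<k. (\<rho> j - x)) = (\<Prod>j<k. (-1) * (x - \<rho> j))" by simp
    also have "\<dots> = (\<Prod>j<k. (-1::real)) * (\<Prod>j<k. (x - \<rho> j))" by (rule prod.distrib)
    also have "\<dots> = (-1)^k * (\<Prod>j<k. (x - \<rho> j))" by simp
    finally show ?thesis by simp
  qed
  moreover have "0 < (\<Prod>j<k. (\<rho> j - x))" using assms(2) by (intro prod_pos) auto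
  moreover have "0 < (\<Prod>j\<in>{k..<d}. (x - \<rho> j))" using assms(3) by (intro prod_pos) auto
  ultimately show ?thesis by (metis mult.assoc mult_pos_pos)
qed

lemma sign_prod_weak:
  fixes \<rho> :: "nat \<Rightarrow> real"
  assumes "k \<le> d" "\<forall>i<k. x \<le> \<rho> i" "\<forall>i. k \<le> i \<and> i < d \<longrightarrow> \<rho> i \<le> x"
  shows "0 \<le> (-1)^k * (\<Prod>j<d. (x - \<rho> j))"
proof -
  have U: "{..<d} = {..<k} \<union> {k..<d}" using assms(1) by auto
  have "(\<Prod>j<d. (x - \<rho> j)) = (\<Prod>j<k. (x - \<rho> j)) * (\<Prod>j\<in>{k..<d}. (x - \<rho> j))"
    unfolding U by (rule prod.union_disjoint) auto
  moreover have "(-1)^k * (\<Prod>j<k. (x - \<rho> j)) = (\<Prod>j<k. (\<rho> j - x))"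
  proof -
    have "(\<Prod>j<k. (\<rho> j - x)) = (\<Prod>j<k. (-1) * (x - \<rho> j))" by simp
    also have "\<dots> = (\<Prod>j<k. (-1::real)) * (\<Prod>j<k. (x - \<rho> j))" by (rule prod.distrib)
    also have "\<dots> = (-1)^k * (\<Prod>j<k. (x - \<rho> j))" by simp
    finally show ?thesis by simp
  qed
  moreover have "0 \<le> (\<Prod>j<k. (\<rho> j - x))" using assms(2) by (intro prod_nonneg) auto
  moreover have "0 \<le> (\<Prod>j\<in>{k..<d}. (x - \<rho> j))" using assms(3) by (intro prod_nonneg) auto
  ultimately show ?thesis by (metis mult.assoc mult_nonneg_nonneg)
qed

definition Bd :: "nat \<Rightarrow> real" where "Bd r = real r ^ r / real (r-1) ^ (r-1)"

lemma poly_Pn_rec: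
  assumes "2 \<le> r" "r \<le> N"
  shows "poly (Pn r N) x = (if N mod r = 0 then x else 1) * poly (Pn r (N-1)) x - poly (Pn r (N-r)) x"
  using Pn_rec[OF assms] by simp

lemma divfacts:
  fixes r k :: nat
  assumes r: "2 \<le> r" and k: "r \<le> k"
  shows "(k - r) div r = k div r - 1"
    "k mod r = 0 \<Longrightarrow> (k-1) div r = k div r - 1"
    "k mod r \<noteq> 0 \<Longrightarrow> (k-1) div r = k div r"
proof -
  define q where "q = k div r"
  define m where "m = k mod r"
  have K: "k = r*q + m" unfolding q_def m_def using mult_div_mod_eq[of r k] by simp
  have mr: "m < r" unfolding m_def using r by simp
  have q1: "q \<ge> 1" unfolding q_def using div_le_mono[OF k, of r] r by simp
  have "k - r = r*(q-1) + m" using K q1 by (cases q) (auto simp: algebra_simps)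
  then show "(k - r) div r = k div r - 1" using dm[OF mr, of "q-1"] q_def by simp
  show "k mod r = 0 \<Longrightarrow> (k-1) div r = k div r - 1"
  proof -
    assume "k mod r = 0"
    then have m0: "m = 0" using m_def by simp
    obtain q' where q': "q = Suc q'" using q1 by (cases q) auto
    have "k = r + r*q'" using K m0 q' by simp
    then have "k - 1 = r*(q-1) + (r-1)" using q' r by simp
    then show ?thesis using dm[of "r-1" r "q-1"] r unfolding q_def[symmetric] by simp
  qed
  show "k mod r \<noteq> 0 \<Longrightarrow> (k-1) div r = k div r"
  proof -
    assume "k mod r \<noteq> 0"
    then have m0: "m \<noteq> 0" using m_def by simp
    then have "k - 1 = r*q + (m-1)" using K by simp
    then show ?thesis using dm[of "m-1" r q] mr unfolding q_def[symmetric] by simp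
  qed
qed

lemma Bd_pos: "2 \<le> r \<Longrightarrow> 0 < Bd r"
  by (simp add: Bd_def)

lemma Bd_mu: "2 \<le> r \<Longrightarrow> ((real r - 1) / real r) ^ (r-1) * Bd r = real r"
proof -
  assume r: "2 \<le> r"
  have r1: "real (r - 1) = real r - 1" using r by simp
  have rr: "real r ^ r = real r * real r ^ (r-1)" using r
    by (metis Suc_diff_1 less_le_trans pos2 power_Suc)
  have "((real r - 1) / real r) ^ (r-1) * Bd r = (real r - 1)^(r-1) / real r^(r-1) * (real r * real r ^ (r-1) / (real r - 1)^(r-1))"
    unfolding Bd_def r1 rr by (simp add: power_divide)
  also have "\<dots> = real r" using r by (simp add: field_simps)
  finally show ?thesis .
qed

lemma Pn_at_B_pos:
  assumes r: "2 \<le> r"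
  shows "0 < poly (Pn r N) (Bd r)"
proof -
  define b where "b = Bd r"
  define \<mu> where "\<mu> = (real r - 1) / real r"
  define w where "w k = poly (Pn r k) b / b ^ (k div r)" for k
  have b0: "0 < b" unfolding b_def using Bd_pos r by simp
  have mu0: "0 \<le> \<mu>" "\<mu> \<le> 1" unfolding \<mu>_def using r by auto
  have mupos: "0 < \<mu>" unfolding \<mu>_def using r by auto
  have mub: "\<mu> ^ (r-1) * b = real r" unfolding \<mu>_def b_def using Bd_mu r by simp
  have wsmall: "w k = 1" if "k < r" for k using that unfolding w_def by (simp add: Pn_small)
  have wrec: "w k = w (k-1) - w (k-r) / b" if "r \<le> k" for k
  proof -
    have dk: "(k - r) div r = k div r - 1" using divfacts(1)[OF r that] .
    have dpos: "k div r \<ge> 1" using div_le_mono[OF that, of r] r by simp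
    show ?thesis
    proof (cases "k mod r = 0")
      case True
      have d1: "(k - 1) div r = k div r - 1" using divfacts(2)[OF r that True] .
      have "w k = (b * poly (Pn r (k-1)) b - poly (Pn r (k-r)) b) / b ^ (k div r)"
        unfolding w_def using poly_Pn_rec[OF r that] True by simp
      also have "\<dots> = w (k-1) - w (k-r) / b"
      proof -
        have bd: "b ^ (k div r) = b * b ^ (k div r - 1)" using dpos
          by (cases "k div r") auto
        have bp: "0 < b ^ (k div r - 1)" using b0 by simp
        show ?thesis unfolding w_def d1 dk bd using b0 bp
          by (simp add: diff_divide_distrib)
      qed
      finally show ?thesis .
    next
      case False
      have d1: "(k - 1) div r = k div r" using divfacts(3)[OF r that False] .
      have "w k = (poly (Pn r (k-1)) b - poly (Pn r (k-r)) b) / b ^ (k div r)"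
        unfolding w_def using poly_Pn_rec[OF r that] False by simp
      also have "\<dots> = w (k-1) - w (k-r) / b"
      proof -
        have bd: "b ^ (k div r) = b * b ^ (k div r - 1)" using dpos
          by (cases "k div r") auto
        have bp: "0 < b ^ (k div r - 1)" using b0 by simp
        show ?thesis unfolding w_def d1 dk bd using b0 bp
          by (simp add: diff_divide_distrib)
      qed
      finally show ?thesis .
    qed
  qed
  have main: "0 < w k \<and> (1 \<le> k \<longrightarrow> \<mu> * w (k-1) \<le> w k)" for k
  proof (induction k rule: less_induct)
    case (less k)
    show ?case
    proof (cases "k < r")
      case True
      then show ?thesis using wsmall mu0 by auto
    next
      case False
      then have kr: "r \<le> k" by simp
      have chain: "\<mu>^j * w (k-1-j) \<le> w (k-1)" if "j \<le> r-1" for j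
        using that
      proof (induction j)
        case 0 then show ?case by simp
      next
        case (Suc j)
        have h1: "1 \<le> k-1-j" and h2: "k-1-j < k" using Suc.prems kr r by auto
        have "\<mu> * w (k-1-j-1) \<le> w (k-1-j)" using less.IH[OF h2] h1 by simp
        moreover have eqj: "k-1-Suc j = k-1-j-1" by simp
        ultimately have "\<mu> * w (k-1-Suc j) \<le> w (k-1-j)" by simp
        then have "\<mu>^j * (\<mu> * w (k-1-Suc j)) \<le> \<mu>^j * w (k-1-j)"
          by (rule mult_left_mono) (use mu0 in simp)
        also have "\<mu>^j * w (k-1-j) \<le> w (k-1)"
        proof -
          have "j \<le> r-1" using Suc.prems by simp
          then show ?thesis by (rule Suc.IH)
        qed
        finally have fin: "\<mu>^j * (\<mu> * w (k-1-Suc j)) \<le> w (k-1)" .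
        have eq: "\<mu>^(Suc j) * w (k-1-Suc j) = \<mu>^j * (\<mu> * w (k-1-Suc j))"
          by (simp only: power_Suc2 mult.assoc)
        show ?case unfolding eq by (rule fin)
      qed
      have e: "k - 1 - (r - 1) = k - r" using kr r by simp
      have c: "\<mu>^(r-1) * w (k-r) \<le> w (k-1)" using chain[of "r-1"] e by simp
      have pos: "0 < w (k-1)" using less.IH[of "k-1"] kr r by simp
      have "w (k-r) / b \<le> w (k-1) / real r"
      proof -
        have "w (k-r) / b = \<mu>^(r-1) * w (k-r) / (\<mu>^(r-1) * b)"
          using mupos b0 by simp
        also have "\<dots> \<le> w (k-1) / real r" unfolding mub using c r by (simp add: divide_right_mono)
        finally show ?thesis .
      qed
      moreover have "w (k-1) - w (k-1) / real r = \<mu> * w (k-1)" using r unfolding \<mu>_def by (simp add: field_simps)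
      ultimately have "\<mu> * w (k-1) \<le> w k" using wrec[OF kr] by linarith
      moreover have "0 < \<mu> * w (k-1)" using pos r unfolding \<mu>_def by simp
      ultimately show ?thesis by simp
    qed
  qed
  have "0 < w N" using main by blast
  then show ?thesis unfolding w_def b_def using b0 b_def
    by (simp add: zero_less_divide_iff)
qed

lemma dec_mono:
  fixes f :: "nat \<Rightarrow> real"
  assumes "\<forall>j. Suc j < d \<longrightarrow> f (Suc j) < f j" "i \<le> j" "j < d"
  shows "f j \<le> f i"
  using assms(2,3)
proof (induction j)
  case 0 then show ?case by simp
next
  case (Suc j)
  show ?case
  proof (cases "i = Suc j")
    case True then show ?thesis by simp
  next
    case False
    then have "i \<le> j" using Suc.prems by simp
    then have "f j \<le> f i" using Suc by simp
    moreover have "f (Suc j) < f j" using assms(1) Suc.prems by simp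
    ultimately show ?thesis by simp
  qed
qed

lemma dec_smono:
  fixes f :: "nat \<Rightarrow> real"
  assumes "\<forall>j. Suc j < d \<longrightarrow> f (Suc j) < f j" "i < j" "j < d"
  shows "f j < f i"
proof -
  obtain j' where j': "j = Suc j'" using assms(2) by (cases j) auto
  have "f j' \<le> f i" using dec_mono[OF assms(1), of i j'] assms j' by simp
  moreover have "f j < f j'" using assms(1) assms(3) j' by simp
  ultimately show ?thesis by simp
qed

definition INV :: "nat \<Rightarrow> nat \<Rightarrow> (nat \<Rightarrow> nat \<Rightarrow> real) \<Rightarrow> bool" where
  "INV r M \<rho> \<longleftrightarrow> (\<forall>m. M \<le> m \<and> m < M + r \<longrightarrow>
     Pn r m = (\<Prod>j< m div r. [:-\<rho> m j, 1:]) \<and>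
     (\<forall>j < m div r. 0 < \<rho> m j \<and> \<rho> m j < Bd r) \<and>
     (\<forall>j. Suc j < m div r \<longrightarrow> \<rho> m (Suc j) < \<rho> m j) \<and>
     (\<forall>m'. m < m' \<and> m' < M + r \<longrightarrow>
        (\<forall>j < m div r. \<rho> m j < \<rho> m' j) \<and>
        (\<forall>j. Suc j < m' div r \<longrightarrow> \<rho> m' (Suc j) < \<rho> m j)))"

lemma INV_0: "2 \<le> r \<Longrightarrow> INV r 0 (\<lambda>_ _. 0)"
  unfolding INV_def by (auto simp: Pn_small)

lemma mod_lemma:
  fixes M r :: nat
  assumes "1 \<le> r" "(M + r - 1) div r = M div r"
  shows "M mod r = 0"
proof (rule ccontr)
  assume a: "M mod r \<noteq> 0"
  define q where "q = M div r"
  define m where "m = M mod r"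
  have K: "M = r*q + m" unfolding q_def m_def using mult_div_mod_eq[of r M] by simp
  have mr: "m < r" unfolding m_def using assms by simp
  have "M + r - 1 = r*(Suc q) + (m - 1)" using K a m_def by simp
  then have "(M + r - 1) div r = Suc q" using dm[of "m-1" r "Suc q"] mr by simp
  then show False using assms(2) q_def by simp
qed

lemma INV_step:
  assumes r: "2 \<le> r" and I: "INV r M \<rho>"
  shows "\<exists>\<rho>'. INV r (Suc M) \<rho>'"
proof -
  define K where "K = M + r"
  define d where "d m = m div r" for m
  define B where "B = Bd r"
  define D where "D = d K"
  have DdM: "D = d M + 1" unfolding D_def d_def K_def using r by simp
  have dmono: "d a \<le> d b" if "a \<le> b" for a b unfolding d_def using that by (rule div_le_mono)
  have KM: "K - r = M" "M + 1 < K" "M < K - 1" "K - 1 < K" "M + 1 \<le> K - 1" "r \<le> K"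
    unfolding K_def using r by auto
  have W: "M \<le> m \<and> m < M + r \<Longrightarrow> Pn r m = (\<Prod>j< d m. [:-\<rho> m j, 1:]) \<and>
     (\<forall>j < d m. 0 < \<rho> m j \<and> \<rho> m j < B) \<and>
     (\<forall>j. Suc j < d m \<longrightarrow> \<rho> m (Suc j) < \<rho> m j) \<and>
     (\<forall>m'. m < m' \<and> m' < M + r \<longrightarrow>
        (\<forall>j < d m. \<rho> m j < \<rho> m' j) \<and>
        (\<forall>j. Suc j < d m' \<longrightarrow> \<rho> m' (Suc j) < \<rho> m j))" for m
    using I unfolding INV_def d_def B_def by blast
  have inW: "M \<le> m \<Longrightarrow> m < K \<Longrightarrow> M \<le> m \<and> m < M + r" for m unfolding K_def by simp
  have pp: "poly (Pn r m) x = (\<Prod>j<d m. (x - \<rho> m j))" if "M \<le> m" "m < K" for m x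
    using W[OF inW[OF that]] by (simp add: poly_prod)
  have pos: "0 < \<rho> m j" "\<rho> m j < B" if "M \<le> m" "m < K" "j < d m" for m j
    using W[OF inW[OF that(1,2)]] that(3) by auto
  have decc: "\<forall>j. Suc j < d m \<longrightarrow> \<rho> m (Suc j) < \<rho> m j" if "M \<le> m" "m < K" for m
    using W[OF inW[OF that]] by blast
  have dec: "\<rho> m j \<le> \<rho> m i" if "M \<le> m" "m < K" "i \<le> j" "j < d m" for m i j
    using dec_mono[OF decc[OF that(1,2)] that(3,4)] .
  have decs: "\<rho> m j < \<rho> m i" if "M \<le> m" "m < K" "i < j" "j < d m" for m i j
    using dec_smono[OF decc[OF that(1,2)] that(3,4)] .
  have blk1s: "\<rho> m j < \<rho> m' j" if "M \<le> m" "m < m'" "m' < K" "j < d m" for m m' j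
    using W[OF inW[OF that(1)]] that unfolding K_def by auto
  have blk1: "\<rho> m j \<le> \<rho> m' j" if "M \<le> m" "m \<le> m'" "m' < K" "j < d m" for m m' j
    using blk1s[of m m' j] that by (cases "m = m'") auto
  have blk2: "\<rho> m' (Suc j) < \<rho> m j" if "M \<le> m" "m < m'" "m' < K" "Suc j < d m'" for m m' j
    using W[OF inW[OF that(1)]] that unfolding K_def by auto
  have dK1: "d M \<le> d (K-1)" "d (M+1) \<le> d (K-1)" "d M \<le> d (M+1)" "d (K-1) \<le> D"
    using dmono KM unfolding D_def by auto
  have recK: "poly (Pn r K) x = (if K mod r = 0 then x else 1) * poly (Pn r (K-1)) x - poly (Pn r M) x" for x
    using poly_Pn_rec[OF r KM(6)] KM(1) by simp
  define L where "L j = (if j < d (K-1) then \<rho> (K-1) j else 0)" for j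
  define U where "U j = (if j = 0 then B else \<rho> (M+1) (j-1))" for j
  have sL: "0 < (-1)^(j+1) * poly (Pn r K) (L j)" if jD: "j < D" for j
  proof (cases "j < d (K-1)")
    case True
    define \<xi> where "\<xi> = \<rho> (K-1) j"
    have "0 < (-1)^j * (\<Prod>i<d M. (\<xi> - \<rho> M i))"
    proof (rule sign_prod)
      show "j \<le> d M" using jD DdM by simp
      show "\<forall>i<j. \<xi> < \<rho> M i"
      proof (intro allI impI)
        fix i assume "i < j"
        have "\<xi> \<le> \<rho> (K-1) (Suc i)" unfolding \<xi>_def using dec[of "K-1" "Suc i" j] KM True \<open>i<j\<close> by simp
        also have "\<dots> < \<rho> M i" using blk2[of M "K-1" i] KM True \<open>i<j\<close> by simp
        finally show "\<xi> < \<rho> M i" .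
      qed
      show "\<forall>i. j \<le> i \<and> i < d M \<longrightarrow> \<rho> M i < \<xi>"
      proof (intro allI impI)
        fix i assume i: "j \<le> i \<and> i < d M"
        have "\<rho> M i \<le> \<rho> M j" using dec[of M j i] i KM by simp
        also have "\<dots> < \<xi>" unfolding \<xi>_def using blk1s[of M "K-1" j] i KM by simp
        finally show "\<rho> M i < \<xi>" .
      qed
    qed
    moreover have "poly (Pn r (K-1)) \<xi> = 0"
    proof -
      have "(\<Prod>i<d (K-1). (\<xi> - \<rho> (K-1) i)) = 0"
        unfolding \<xi>_def using True by (intro prod_zero) auto
      then show ?thesis using pp[of "K-1" \<xi>] KM by simp
    qed
    ultimately show ?thesis using recK[of \<xi>] pp[of M \<xi>] KM True unfolding L_def \<xi>_def by simp
  next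
    case False
    have j: "j = d M" "d (K-1) = d M" using False jD DdM dK1 by auto
    have "(M + r - 1) div r = M div r" using j(2) unfolding d_def K_def by simp
    then have "M mod r = 0" using mod_lemma r by simp
    then have Kmod: "K mod r = 0" unfolding K_def by simp
    have "0 < (-1)^j * (\<Prod>i<d M. (0 - \<rho> M i))"
      by (rule sign_prod) (use j pos KM in auto)
    then show ?thesis using recK[of 0] pp[of M 0] KM False Kmod unfolding L_def by simp
  qed
  have sU: "0 < (-1)^j * poly (Pn r K) (U j)" if jD: "j < D" for j
  proof (cases "j = 0")
    case True
    then show ?thesis unfolding U_def B_def using Pn_at_B_pos[OF r] by simp
  next
    case False
    define \<eta> where "\<eta> = \<rho> (M+1) (j-1)"
    have jm: "j - 1 < d M" "j \<le> d M" using jD DdM False by auto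
    have j1: "j - 1 < d (M+1)" "j - 1 < d (K-1)" using jm dK1 by auto
    have eta0: "0 < \<eta>" unfolding \<eta>_def using pos[of "M+1" "j-1"] j1 KM by simp
    have A: "0 < (-1)^(j-1) * (\<Prod>i<d M. (\<eta> - \<rho> M i))"
    proof (rule sign_prod)
      show "j - 1 \<le> d M" using jm by simp
      show "\<forall>i<j-1. \<eta> < \<rho> M i"
      proof (intro allI impI)
        fix i assume i: "i < j - 1"
        have "\<eta> \<le> \<rho> (M+1) (Suc i)" unfolding \<eta>_def using dec[of "M+1" "Suc i" "j-1"] KM i j1 by simp
        also have "\<dots> < \<rho> M i" using blk2[of M "M+1" i] KM i j1 by simp
        finally show "\<eta> < \<rho> M i" .
      qed
      show "\<forall>i. j - 1 \<le> i \<and> i < d M \<longrightarrow> \<rho> M i < \<eta>"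
      proof (intro allI impI)
        fix i assume i: "j - 1 \<le> i \<and> i < d M"
        have "\<rho> M i \<le> \<rho> M (j-1)" using dec[of M "j-1" i] i KM by simp
        also have "\<dots> < \<eta>" unfolding \<eta>_def using blk1s[of M "M+1" "j-1"] jm KM by simp
        finally show "\<rho> M i < \<eta>" .
      qed
    qed
    have Bw: "0 \<le> (-1)^j * (\<Prod>i<d (K-1). (\<eta> - \<rho> (K-1) i))"
    proof (rule sign_prod_weak)
      show "j \<le> d (K-1)" using jm dK1 by simp
      show "\<forall>i<j. \<eta> \<le> \<rho> (K-1) i"
      proof (intro allI impI)
        fix i assume i: "i < j"
        have "\<eta> \<le> \<rho> (K-1) (j-1)" unfolding \<eta>_def using blk1[of "M+1" "K-1" "j-1"] KM j1 by simp
        also have "\<dots> \<le> \<rho> (K-1) i" using dec[of "K-1" i "j-1"] KM i j1 by simp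
        finally show "\<eta> \<le> \<rho> (K-1) i" .
      qed
      show "\<forall>i. j \<le> i \<and> i < d (K-1) \<longrightarrow> \<rho> (K-1) i \<le> \<eta>"
      proof (intro allI impI)
        fix i assume i: "j \<le> i \<and> i < d (K-1)"
        have "\<rho> (K-1) i \<le> \<rho> (K-1) j" using dec[of "K-1" j i] i KM by simp
        also have "\<rho> (K-1) j \<le> \<eta>"
        proof (cases "M + 1 = K - 1")
          case True
          then show ?thesis unfolding \<eta>_def using dec[of "K-1" "j-1" j] i KM by simp
        next
          case ne: False
          have "Suc (j-1) = j" using False by simp
          then show ?thesis unfolding \<eta>_def using blk2[of "M+1" "K-1" "j-1"] i KM ne by simp
        qed
        finally show "\<rho> (K-1) i \<le> \<eta>" .
      qed
    qed
    have c0: "0 \<le> (if K mod r = 0 then \<eta> else 1)" using eta0 by simp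
    have sgn: "(-1::real)^j = - ((-1)^(j-1))" using False by (cases j) auto
    define cc where "cc = (if K mod r = 0 then \<eta> else 1)"
    define aa where "aa = (\<Prod>i<d (K-1). (\<eta> - \<rho> (K-1) i))"
    define bb where "bb = (\<Prod>i<d M. (\<eta> - \<rho> M i))"
    define ss where "ss = (-1::real)^(j-1)"
    have e1: "poly (Pn r K) \<eta> = cc * aa - bb"
      using recK[of \<eta>] pp[of "K-1" \<eta>] pp[of M \<eta>] KM unfolding cc_def aa_def bb_def by simp
    have "(-1)^j * poly (Pn r K) \<eta> = cc * ((-1)^j * aa) + ss * bb"
      unfolding e1 sgn ss_def[symmetric] by (simp add: algebra_simps)
    then have "(-1)^j * poly (Pn r K) \<eta> =
        (if K mod r = 0 then \<eta> else 1) * ((-1)^j * (\<Prod>i<d (K-1). (\<eta> - \<rho> (K-1) i)))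
        + (-1)^(j-1) * (\<Prod>i<d M. (\<eta> - \<rho> M i))"
      unfolding cc_def aa_def bb_def ss_def .
    moreover have "0 \<le> (if K mod r = 0 then \<eta> else 1) * ((-1)^j * (\<Prod>i<d (K-1). (\<eta> - \<rho> (K-1) i)))"
      using c0 Bw by simp
    ultimately have "0 < (-1)^j * poly (Pn r K) \<eta>" using A by linarith
    then show ?thesis unfolding U_def \<eta>_def using False by simp
  qed
  have LU: "L j < U j" if jD: "j < D" for j
  proof (cases "j = 0")
    case True
    then show ?thesis unfolding L_def U_def using pos[of "K-1" 0] KM
      by (cases "0 < d (K-1)") (auto simp: B_def Bd_pos[OF r])
  next
    case False
    have jm: "j - 1 < d M" "j \<le> d M" using jD DdM False by auto
    have j1: "j - 1 < d (M+1)" using jm dK1 by auto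
    show ?thesis
    proof (cases "j < d (K-1)")
      case jK: True
      have "\<rho> (K-1) j < \<rho> (M+1) (j-1)"
      proof (cases "M + 1 = K - 1")
        case True
        then show ?thesis using decs[of "K-1" "j-1" j] jK KM False by simp
      next
        case ne: False
        have "Suc (j-1) = j" using False by simp
        then show ?thesis using blk2[of "M+1" "K-1" "j-1"] jK KM ne by simp
      qed
      then show ?thesis unfolding L_def U_def using jK False by simp
    next
      case jK: False
      then show ?thesis unfolding L_def U_def using False pos[of "M+1" "j-1"] KM j1 by simp
    qed
  qed
  have ex: "\<forall>j. \<exists>x. j < D \<longrightarrow> L j < x \<and> x < U j \<and> poly (Pn r K) x = 0"
  proof
    fix j
    show "\<exists>x. j < D \<longrightarrow> L j < x \<and> x < U j \<and> poly (Pn r K) x = 0"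
    proof (cases "j < D")
      case True
      have "0 < ((-1)^(j+1) * poly (Pn r K) (L j)) * ((-1)^j * poly (Pn r K) (U j))"
        using mult_pos_pos[OF sL[OF True] sU[OF True]] .
      moreover have "((-1)^(j+1) * poly (Pn r K) (L j)) * ((-1)^j * poly (Pn r K) (U j))
          = - (poly (Pn r K) (L j) * poly (Pn r K) (U j))"
      proof -
        have "(-1::real)^(j+1) * (-1)^j = - ((-1)^j * (-1)^j)" by simp
        also have "(-1::real)^j * (-1)^j = 1" by (simp flip: power_add)
        finally have "(-1::real)^(j+1) * (-1)^j = -1" by simp
        then show ?thesis by (simp add: algebra_simps)
      qed
      ultimately have "poly (Pn r K) (L j) * poly (Pn r K) (U j) < 0" by linarith
      then obtain x where "L j < x" "x < U j" "poly (Pn r K) x = 0"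
        using poly_IVT[OF LU[OF True]] by blast
      then show ?thesis by blast
    next
      case False then show ?thesis by simp
    qed
  qed
  from choice[OF ex] obtain \<sigma> where \<sigma>: "\<And>j. j < D \<Longrightarrow> L j < \<sigma> j \<and> \<sigma> j < U j \<and> poly (Pn r K) (\<sigma> j) = 0"
    by blast
  have Ljge: "\<rho> m j \<le> L j" if "M + 1 \<le> m" "m < K" "j < d m" for m j
  proof -
    have "m \<le> K - 1" using that by simp
    then have "j < d (K-1)" using that dmono[of m "K-1"] by simp
    then show ?thesis unfolding L_def using blk1[of m "K-1" j] that KM by simp
  qed
  have Ule: "U (Suc j) \<le> \<rho> m j" if "M + 1 \<le> m" "m < K" "Suc j < D" for m j
  proof -
    have "j < d (M+1)" using that DdM dK1 by simp
    then show ?thesis unfolding U_def using blk1[of "M+1" m j] that KM by simp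
  qed
  have sdec: "\<forall>j. Suc j < D \<longrightarrow> \<sigma> (Suc j) < \<sigma> j"
  proof (intro allI impI)
    fix j assume j: "Suc j < D"
    have jK: "j < d (K-1)" using j DdM dK1 by simp
    have "\<sigma> (Suc j) < U (Suc j)" using \<sigma>[OF j] by simp
    also have "\<dots> \<le> \<rho> (K-1) j" using Ule[of "K-1" j] KM j by simp
    also have "\<dots> = L j" unfolding L_def using jK by simp
    also have "\<dots> < \<sigma> j" using \<sigma>[of j] j by simp
    finally show "\<sigma> (Suc j) < \<sigma> j" .
  qed
  have L0: "0 \<le> L j" for j unfolding L_def using pos[of "K-1" j] KM by auto
  have UB: "U j \<le> B" if "j < D" for j
  proof (cases "j = 0")
    case True then show ?thesis unfolding U_def by simp
  next
    case False
    have "j - 1 < d (M+1)" using that DdM dK1 False by simp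
    then have "\<rho> (M+1) (j-1) < B" using pos[of "M+1" "j-1"] KM by simp
    then show ?thesis unfolding U_def using False by simp
  qed
  have sbounds: "0 < \<sigma> j \<and> \<sigma> j < B" if "j < D" for j
    using \<sigma>[OF that] L0[of j] UB[OF that] by auto
  have sinj: "inj_on \<sigma> {..<D}"
  proof (rule inj_onI)
    fix a b assume ab: "a \<in> {..<D}" "b \<in> {..<D}" "\<sigma> a = \<sigma> b"
    show "a = b"
    proof (rule ccontr)
      assume "a \<noteq> b"
      then consider "a < b" | "b < a" by linarith
      then show False
        using dec_smono[OF sdec, of a b] dec_smono[OF sdec, of b a] ab by cases auto
    qed
  qed
  have Kprod: "Pn r K = (\<Prod>j<D. [:-\<sigma> j, 1:])"
    by (rule prod_roots) (use Pn_degree Pn_coeff_top \<sigma> sinj in \<open>auto simp: D_def d_def\<close>)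
  define \<rho>' where "\<rho>' m = (if m = K then \<sigma> else \<rho> m)" for m
  have "INV r (Suc M) \<rho>'"
    unfolding INV_def
  proof (intro allI impI)
    fix m assume m: "Suc M \<le> m \<and> m < Suc M + r"
    show "Pn r m = (\<Prod>j<m div r. [:- \<rho>' m j, 1:]) \<and>
         (\<forall>j<m div r. 0 < \<rho>' m j \<and> \<rho>' m j < Bd r) \<and>
         (\<forall>j. Suc j < m div r \<longrightarrow> \<rho>' m (Suc j) < \<rho>' m j) \<and>
         (\<forall>m'. m < m' \<and> m' < Suc M + r \<longrightarrow>
              (\<forall>j<m div r. \<rho>' m j < \<rho>' m' j) \<and>
              (\<forall>j. Suc j < m' div r \<longrightarrow> \<rho>' m' (Suc j) < \<rho>' m j))"
    proof (cases "m = K")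
      case True
      have "\<forall>m'. m < m' \<and> m' < Suc M + r \<longrightarrow> False" using True unfolding K_def by auto
      then show ?thesis using True Kprod sbounds sdec unfolding \<rho>'_def D_def d_def B_def by auto
    next
      case False
      have mK: "m < K" "M \<le> m" "M + 1 \<le> m" using m False unfolding K_def by auto
      have old: "Pn r m = (\<Prod>j<m div r. [:- \<rho>' m j, 1:]) \<and>
         (\<forall>j<m div r. 0 < \<rho>' m j \<and> \<rho>' m j < Bd r) \<and>
         (\<forall>j. Suc j < m div r \<longrightarrow> \<rho>' m (Suc j) < \<rho>' m j)"
        using W[OF inW[OF mK(2,1)]] False unfolding \<rho>'_def d_def B_def by simp
      have new: "(\<forall>j<m div r. \<rho>' m j < \<rho>' m' j) \<and>
              (\<forall>j. Suc j < m' div r \<longrightarrow> \<rho>' m' (Suc j) < \<rho>' m j)"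
        if m': "m < m'" "m' < Suc M + r" for m'
      proof (cases "m' = K")
        case True
        have a: "\<forall>j<m div r. \<rho> m j < \<sigma> j"
        proof (intro allI impI)
          fix j assume j: "j < m div r"
          have jD: "j < D" using j dmono[of m K] mK unfolding D_def d_def by simp
          have "\<rho> m j \<le> L j" using Ljge[of m j] mK j unfolding d_def by simp
          then show "\<rho> m j < \<sigma> j" using \<sigma>[OF jD] by simp
        qed
        have b: "\<forall>j. Suc j < m' div r \<longrightarrow> \<sigma> (Suc j) < \<rho> m j"
        proof (intro allI impI)
          fix j assume j: "Suc j < m' div r"
          then have jD: "Suc j < D" using True unfolding D_def d_def by simp
          have "\<sigma> (Suc j) < U (Suc j)" using \<sigma>[OF jD] by simp
          also have "\<dots> \<le> \<rho> m j" using Ule[OF mK(3,1) jD] .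
          finally show "\<sigma> (Suc j) < \<rho> m j" .
        qed
        show ?thesis using a b True False unfolding \<rho>'_def by simp
      next
        case m'K: False
        have "m' < K" using m' m'K unfolding K_def by simp
        have "(\<forall>j<m div r. \<rho> m j < \<rho> m' j) \<and>
              (\<forall>j. Suc j < m' div r \<longrightarrow> \<rho> m' (Suc j) < \<rho> m j)"
          using blk1s[of m m'] blk2[of m m'] mK m' \<open>m' < K\<close> unfolding d_def by auto
        then show ?thesis using m'K False unfolding \<rho>'_def by simp
      qed
      show ?thesis using old new by blast
    qed
  qed
  then show ?thesis by blast
qed

lemma INV_all: "2 \<le> r \<Longrightarrow> \<exists>\<rho>. INV r M \<rho>"
proof (induction M)
  case 0 then show ?case using INV_0 by blast
next
  case (Suc M) then show ?case using INV_step by blast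
qed

lemma map_poly_of_real_add:
  "map_poly (of_real :: real \<Rightarrow> complex) (p + q) = map_poly of_real p + map_poly of_real q"
  by (rule poly_eqI) (simp add: coeff_map_poly)

lemma map_poly_of_real_smult:
  "map_poly (of_real :: real \<Rightarrow> complex) (smult a q) = smult (of_real a) (map_poly of_real q)"
  by (rule poly_eqI) (simp add: coeff_map_poly)

lemma map_poly_of_real_mult:
  "map_poly (of_real :: real \<Rightarrow> complex) (p * q) = map_poly of_real p * map_poly of_real q"
proof (induction p)
  case 0 then show ?case by simp
next
  case (pCons a p)
  have "pCons a p * q = smult a q + pCons 0 (p * q)" by simp
  then show ?case using pCons
    by (simp add: map_poly_of_real_add map_poly_of_real_smult map_poly_pCons)
qed

lemma map_poly_of_real_prod:
  fixes n :: nat and \<rho> :: "nat \<Rightarrow> real"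
  shows "map_poly (of_real :: real \<Rightarrow> complex) (\<Prod>j<n. [:-\<rho> j, 1:]) = (\<Prod>j<n. [:-of_real (\<rho> j), 1:])"
proof (induction n)
  case 0 then show ?case by simp
next
  case (Suc n)
  have "map_poly (of_real :: real \<Rightarrow> complex) (\<Prod>j<Suc n. [:-\<rho> j, 1:]) =
      map_poly of_real (\<Prod>j<n. [:-\<rho> j, 1:]) * map_poly of_real [:-\<rho> n, 1:]"
    by (simp only: prod.lessThan_Suc map_poly_of_real_mult)
  also have "map_poly (of_real :: real \<Rightarrow> complex) [:-\<rho> n, 1:] = [:-of_real (\<rho> n), 1:]"
    by (simp add: map_poly_pCons)
  finally show ?case using Suc by (simp only: prod.lessThan_Suc)
qed

lemma Bd_lt_e:
  assumes r: "2 \<le> r"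
  shows "Bd r < exp 1 * real r"
proof -
  define m where "m = r - 1"
  have m1: "1 \<le> m" unfolding m_def using r by simp
  have rm: "real r = real m + 1" unfolding m_def using r by simp
  have rr: "r = Suc m" unfolding m_def using r by simp
  have "Bd r = real r * (real r / real m) ^ m"
    unfolding Bd_def using m1 by (simp add: rr power_divide m_def[symmetric])
  also have "(real r / real m) ^ m = (1 + 1 / real m) ^ m"
    using m1 by (simp add: rm field_simps)
  also have "\<dots> = exp (real m * ln (1 + 1 / real m))"
  proof -
    have "0 \<le> 1 / real m" by simp
    then have p: "0 < 1 + 1 / real m" by linarith
    have "exp (real m * ln (1 + 1 / real m)) = exp (ln ((1 + 1 / real m) ^ m))"
      using p by (simp add: ln_realpow)
    also have "\<dots> = (1 + 1 / real m) ^ m" using p by simp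
    finally show ?thesis by simp
  qed
  also have "\<dots> < exp 1"
  proof -
    have "ln (1 + 1 / real m) < 1 / real m" using m1 by (intro ln_add_one_self_less_self) simp
    then have "real m * ln (1 + 1 / real m) < real m * (1 / real m)"
      using m1 by (intro mult_strict_left_mono) auto
    then show ?thesis using m1 by simp
  qed
  finally show ?thesis using r by (simp add: mult.commute)
qed

theorem lemma3:
  fixes r l n :: nat
  assumes "r \<ge> 2" and "l < r" and "n \<ge> 1"
  shows "(\<forall>z::complex. poly (map_poly complex_of_real (hpoly r l n)) z = 0 \<longrightarrow>
            z \<in> \<real> \<and> 0 < Re z \<and> Re z < real r ^ r / real (r - 1) ^ (r - 1))
         \<and> real r ^ r / real (r - 1) ^ (r - 1) < exp 1 * real r
         \<and> (\<forall>z::complex. poly (map_poly complex_of_real (hpoly r l n)) z = 0 \<longrightarrow>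
            z \<in> \<real> \<and> 0 < Re z \<and> Re z < exp 1 * real r)"
proof -
  define N where "N = r*n + l"
  have Nd: "N div r = n" "N mod r = l" unfolding N_def using dm[OF assms(2)] by auto
  have hP: "hpoly r l n = Pn r N" unfolding Pn_def Nd ..
  obtain \<rho> where I: "INV r N \<rho>" using INV_all[OF assms(1)] by blast
  then have fac: "Pn r N = (\<Prod>j<n. [:-\<rho> N j, 1:])" and bnd: "\<forall>j<n. 0 < \<rho> N j \<and> \<rho> N j < Bd r"
    unfolding INV_def using assms(1) Nd by auto
  have roots: "z \<in> \<real> \<and> 0 < Re z \<and> Re z < Bd r"
    if "poly (map_poly complex_of_real (hpoly r l n)) z = 0" for z
  proof -
    have "(\<Prod>j<n. (z - of_real (\<rho> N j))) = 0"
      using that unfolding hP fac map_poly_of_real_prod by (simp add: poly_prod)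
    then obtain j where j: "j < n" "z = of_real (\<rho> N j)" by auto
    then show ?thesis using bnd by auto
  qed
  have be: "Bd r < exp 1 * real r" using Bd_lt_e[OF assms(1)] .
  show ?thesis using roots be unfolding Bd_def by (meson less_trans)
qed

end
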